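(* Let $p\ge0$, $m\ge1$ be integers and, for $j\ge p$, let $\omega_j=\omega_j^{p,m}=\frac{\sqrt{j!\,(j+m)!}}{(j-p)!}$. Let $\breve{\mathbb{H}}$ be the backward weighted shift on $\mathbb{B}_p$ defined by $\breve{\mathbb{H}}e_p=0$ and $\breve{\mathbb{H}}e_k=\omega_{k-1}e_{k-1}$ for $k>p$, i.e. $$\breve{\mathbb{H}}\Big(\sum_{k\ge p}a_ke_k\Big)=\sum_{k\ge p}\omega_k a_{k+1}e_k,$$ with maximal domain $D(\breve{\mathbb{H}})=\{\phi\in\mathbb{B}_p:\breve{\mathbb{H}}\phi\in\mathbb{B}_p\}$. (Equivalently $\breve{\mathbb{H}}=a^{*p}a^{p+m}\mathbb{U}$ restricted to $\mathbb{B}_p$, where $\mathbb{U}e_k=e_{k+m-1}$.) Then $\breve{\mathbb{H}}$ is chaotic on $\mathbb{B}_p$.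
   Context: The Bargmann space $\mathbb{B}$ is the Hilbert space of entire functions with $\|\phi\|^2=\int_{\mathbb{C}}|\phi(z)|^2e^{-|z|^2}dx\,dy<\infty$; $e_k(z)=z^k/\sqrt{k!}$ is an orthonormal basis; $a\phi=\phi'$, $a^*\phi=z\phi$. $\mathbb{B}_p$ is the closed subspace spanned by $\{e_k:k\ge p\}$. Definition (Devaney): a densely defined linear operator $T$ on a Banach space $X$ is chaotic if (1) $T^n$ is closed for every positive integer $n$; (2) there is $\phi\in\bigcap_{n\ge1}D(T^n)$ whose orbit $\{\phi,T\phi,T^2\phi,\dots\}$ is dense in $X$; (3) the set of periodic points $\{\phi\in X:\exists j\in\mathbb{N},\ T^j\phi=\phi\}$ is dense in $X$. *)

theory Defs
  imports Complex_Main
begin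

text \<open>The Bargmann space is modelled through its coordinates in the orthonormal
basis e_k = z^k / sqrt(k!): phi = sum_k a_k e_k corresponds to the square-summable
coefficient sequence a.  This identification is unitary (norm of phi = l2 norm of a).\<close>

definition l2 :: "(nat \<Rightarrow> complex) set" where
  "l2 = {a. summable (\<lambda>k. (cmod (a k))\<^sup>2)}"

definition l2norm :: "(nat \<Rightarrow> complex) \<Rightarrow> real" where
  "l2norm a = sqrt (\<Sum>k. (cmod (a k))\<^sup>2)"

definition Bp :: "nat \<Rightarrow> (nat \<Rightarrow> complex) set" where
  "Bp p = {a \<in> l2. \<forall>k<p. a k = 0}"

definition omega :: "nat \<Rightarrow> nat \<Rightarrow> nat \<Rightarrow> real" where
  "omega p m j = sqrt (fact j * fact (j + m)) / fact (j - p)"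

definition Hbrev :: "nat \<Rightarrow> nat \<Rightarrow> (nat \<Rightarrow> complex) \<Rightarrow> (nat \<Rightarrow> complex)" where
  "Hbrev p m a = (\<lambda>k. if p \<le> k then complex_of_real (omega p m k) * a (Suc k) else 0)"

definition Hdom :: "nat \<Rightarrow> nat \<Rightarrow> (nat \<Rightarrow> complex) set" where
  "Hdom p m = {a \<in> Bp p. Hbrev p m a \<in> Bp p}"

definition pow_dom :: "(nat \<Rightarrow> complex) set \<Rightarrow> ((nat \<Rightarrow> complex) \<Rightarrow> (nat \<Rightarrow> complex))
    \<Rightarrow> nat \<Rightarrow> (nat \<Rightarrow> complex) set" where
  "pow_dom D T n = {x \<in> D. \<forall>j<n. (T ^^ j) x \<in> D}"

definition dense_in :: "(nat \<Rightarrow> complex) set \<Rightarrow> (nat \<Rightarrow> complex) set \<Rightarrow> bool" where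
  "dense_in S X \<longleftrightarrow> S \<subseteq> X \<and> (\<forall>x\<in>X. \<forall>e>0. \<exists>s\<in>S. l2norm (x - s) < e)"

definition closed_op :: "(nat \<Rightarrow> complex) set \<Rightarrow> (nat \<Rightarrow> complex) set
    \<Rightarrow> ((nat \<Rightarrow> complex) \<Rightarrow> (nat \<Rightarrow> complex)) \<Rightarrow> bool" where
  "closed_op X D T \<longleftrightarrow>
     (\<forall>xs x y. (\<forall>i. xs i \<in> D) \<longrightarrow> x \<in> X \<longrightarrow> y \<in> X \<longrightarrow>
        (\<lambda>i. l2norm (xs i - x)) \<longlonglongrightarrow> 0 \<longrightarrow> (\<lambda>i. l2norm (T (xs i) - y)) \<longlonglongrightarrow> 0 \<longrightarrow>
        x \<in> D \<and> T x = y)"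

definition linear_op :: "(nat \<Rightarrow> complex) set \<Rightarrow> (nat \<Rightarrow> complex) set
    \<Rightarrow> ((nat \<Rightarrow> complex) \<Rightarrow> (nat \<Rightarrow> complex)) \<Rightarrow> bool" where
  "linear_op X D T \<longleftrightarrow> D \<subseteq> X \<and> T ` D \<subseteq> X \<and>
     (\<forall>x\<in>D. \<forall>y\<in>D. \<forall>c::complex. (\<lambda>k. x k + c * y k) \<in> D \<and>
         T (\<lambda>k. x k + c * y k) = (\<lambda>k. T x k + c * T y k))"

definition chaotic :: "(nat \<Rightarrow> complex) set \<Rightarrow> (nat \<Rightarrow> complex) set
    \<Rightarrow> ((nat \<Rightarrow> complex) \<Rightarrow> (nat \<Rightarrow> complex)) \<Rightarrow> bool" where
  "chaotic X D T \<longleftrightarrow>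
     linear_op X D T \<and> dense_in D X \<and>
     (\<forall>n\<ge>1. closed_op X (pow_dom D T n) (T ^^ n)) \<and>
     (\<exists>\<phi>. (\<forall>n\<ge>1. \<phi> \<in> pow_dom D T n) \<and> dense_in (range (\<lambda>n. (T ^^ n) \<phi>)) X) \<and>
     dense_in {\<phi>\<in>X. \<exists>j\<ge>1. \<phi> \<in> pow_dom D T j \<and> (T ^^ j) \<phi> = \<phi>} X"

end

theory Submission
  imports Defs "HOL-Library.Discrete_Functions" "HOL-Library.Countable" "HOL-Library.Infinite_Set"
begin


lemma sq2: "((x::real) + y)\<^sup>2 \<le> 2 * x\<^sup>2 + 2 * y\<^sup>2"
proof -
  have "0 \<le> (x - y)\<^sup>2" by simp
  thus ?thesis by (simp add: power2_eq_square algebra_simps)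
qed

lemma l2_lincomb:
  assumes "a \<in> l2" "b \<in> l2"
  shows "(\<lambda>k. a k + c * b k) \<in> l2"
proof -
  have sa: "summable (\<lambda>k. (cmod (a k))\<^sup>2)" and sb: "summable (\<lambda>k. (cmod (b k))\<^sup>2)"
    using assms unfolding l2_def by auto
  have S: "summable (\<lambda>k. 2 * (cmod (a k))\<^sup>2 + (2 * (cmod c)\<^sup>2) * (cmod (b k))\<^sup>2)"
    by (rule summable_add[OF summable_mult[OF sa] summable_mult[OF sb]])
  have B: "norm ((cmod (a k + c * b k))\<^sup>2) \<le> 2 * (cmod (a k))\<^sup>2 + (2 * (cmod c)\<^sup>2) * (cmod (b k))\<^sup>2" for k
  proof -
    have "cmod (a k + c * b k) \<le> cmod (a k) + cmod (c * b k)"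
      by (rule norm_triangle_ineq)
    hence "cmod (a k + c * b k) \<le> cmod (a k) + cmod c * cmod (b k)"
      by (simp add: norm_mult)
    hence "(cmod (a k + c * b k))\<^sup>2 \<le> (cmod (a k) + cmod c * cmod (b k))\<^sup>2"
      by (simp add: power_mono)
    also have "\<dots> \<le> 2 * (cmod (a k))\<^sup>2 + 2 * (cmod c * cmod (b k))\<^sup>2"
      by (rule sq2)
    also have "\<dots> = 2 * (cmod (a k))\<^sup>2 + (2 * (cmod c)\<^sup>2) * (cmod (b k))\<^sup>2"
      by (simp add: power_mult_distrib)
    finally show ?thesis by simp
  qed
  have "summable (\<lambda>k. (cmod (a k + c * b k))\<^sup>2)"
    by (rule summable_comparison_test[OF _ S]) (use B in blast)
  thus ?thesis unfolding l2_def by simp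
qed

lemma Bp_lincomb:
  assumes "a \<in> Bp p" "b \<in> Bp p"
  shows "(\<lambda>k. a k + c * b k) \<in> Bp p"
  using assms l2_lincomb unfolding Bp_def by auto

lemma l2norm_le:
  assumes "\<And>k. (cmod (a k))\<^sup>2 \<le> f k" "f sums s"
  shows "a \<in> l2" "l2norm a \<le> sqrt s"
proof -
  have s: "summable (\<lambda>k. (cmod (a k))\<^sup>2)"
  proof (rule summable_comparison_test)
    show "summable f" using assms(2) by (simp add: sums_iff)
    show "\<exists>N. \<forall>n\<ge>N. norm ((cmod (a n))\<^sup>2) \<le> f n" using assms(1) by simp
  qed
  thus "a \<in> l2" by (simp add: l2_def)
  have "(\<Sum>k. (cmod (a k))\<^sup>2) \<le> (\<Sum>k. f k)"
    using assms s by (intro suminf_le) (simp_all add: sums_iff)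
  thus "l2norm a \<le> sqrt s" using assms(2) by (simp add: l2norm_def sums_iff)
qed

lemma coord_le_l2norm:
  assumes "a \<in> l2"
  shows "cmod (a k) \<le> l2norm a"
proof -
  have "(\<Sum>j\<in>{k}. (cmod (a j))\<^sup>2) \<le> (\<Sum>j. (cmod (a j))\<^sup>2)"
    using assms unfolding l2_def by (intro sum_le_suminf) auto
  hence "(cmod (a k))\<^sup>2 \<le> (\<Sum>j. (cmod (a j))\<^sup>2)" by simp
  thus ?thesis unfolding l2norm_def by (simp add: real_le_rsqrt)
qed

definition W :: "nat \<Rightarrow> nat \<Rightarrow> nat \<Rightarrow> nat \<Rightarrow> real" where
  "W p m N k = (\<Prod>t<N. omega p m (k + t))"

lemma omega_sq_ge:
  assumes "m \<ge> 1"
  shows "(omega p m t)\<^sup>2 \<ge> real t + 1"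
proof -
  have f1: "fact (t - p) \<le> (fact t :: real)" by (intro fact_mono) auto
  have "(real t + 1) * fact t = fact (Suc t)" by (simp add: algebra_simps)
  also have "\<dots> \<le> (fact (t + m) :: real)" using assms by (intro fact_mono) auto
  finally have f3: "(real t + 1) * fact t \<le> (fact (t + m) :: real)" .
  have f2: "(real t + 1) * fact (t - p) \<le> (fact (t + m) :: real)"
  proof -
    have "(real t + 1) * fact (t - p) \<le> (real t + 1) * fact t" using f1 by (intro mult_left_mono) auto
    thus ?thesis using f3 by linarith
  qed
  have "(real t + 1) * (fact (t - p))\<^sup>2 = ((real t + 1) * fact (t - p)) * fact (t - p)"
    by (simp add: power2_eq_square)
  also have "\<dots> \<le> fact (t + m) * fact t"
    using f1 f2 by (intro mult_mono) auto
  finally have "(real t + 1) * (fact (t - p))\<^sup>2 \<le> fact t * fact (t+m)" by (simp add: mult.commute)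
  moreover have "(omega p m t)\<^sup>2 = fact t * fact (t+m) / (fact (t - p))\<^sup>2"
    unfolding omega_def by (simp add: power_divide)
  ultimately show ?thesis by (simp add: pos_le_divide_eq)
qed

lemma omega_ge1:
  assumes "m \<ge> 1"
  shows "omega p m t \<ge> 1"
proof -
  have "(omega p m t)\<^sup>2 \<ge> 1" using omega_sq_ge[OF assms, where p=p and t=t] by simp
  moreover have "omega p m t \<ge> 0" unfolding omega_def by simp
  ultimately show ?thesis using power2_le_imp_le[of 1 "omega p m t"] by simp
qed

lemma W_ge1: "m \<ge> 1 \<Longrightarrow> W p m N k \<ge> 1"
  unfolding W_def by (intro prod_ge_1) (auto intro: omega_ge1)

lemma W_pos: "m \<ge> 1 \<Longrightarrow> W p m N k > 0"
  using W_ge1 by (smt (verit))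

lemma W_0 [simp]: "W p m 0 k = 1" by (simp add: W_def)

lemma W_Suc: "W p m (Suc N) k = omega p m k * W p m N (Suc k)"
  unfolding W_def prod.lessThan_Suc_shift by simp

lemma W_add: "W p m (a + b) k = W p m a k * W p m b (k + a)"
proof (induction a arbitrary: k)
  case 0 then show ?case by simp
next
  case (Suc a) then show ?case by (simp add: W_Suc)
qed

lemma Tpow:
  "p \<le> k \<Longrightarrow> (Hbrev p m ^^ N) a k = complex_of_real (W p m N k) * a (k + N)"
proof (induction N arbitrary: k)
  case 0 then show ?case by simp
next
  case (Suc N)
  have "(Hbrev p m ^^ Suc N) a k = Hbrev p m ((Hbrev p m ^^ N) a) k" by simp
  also have "\<dots> = complex_of_real (omega p m k) * (Hbrev p m ^^ N) a (Suc k)"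
    using Suc.prems by (simp add: Hbrev_def)
  also have "\<dots> = complex_of_real (omega p m k) * (complex_of_real (W p m N (Suc k)) * a (Suc k + N))"
    using Suc.prems Suc.IH[of "Suc k"] by simp
  also have "\<dots> = complex_of_real (W p m (Suc N) k) * a (k + Suc N)"
    by (simp add: W_Suc)
  finally show ?case .
qed

lemma Tpow_low:
  "k < p \<Longrightarrow> N \<ge> 1 \<Longrightarrow> (Hbrev p m ^^ N) a k = 0"
  by (cases N) (auto simp: Hbrev_def)


lemma fact_16: "(16::nat) ^ d \<le> 16 ^ 15 * fact d"
proof (induction d)
  case 0 then show ?case by simp
next
  case (Suc d)
  show ?case
  proof (cases "d < 15")
    case True
    hence "(16::nat) ^ Suc d \<le> 16 ^ 15" by (intro power_increasing) auto
    also have "\<dots> \<le> 16 ^ 15 * fact (Suc d)" by (metis fact_ge_1 mult_le_mono2 mult.right_neutral)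
    finally show ?thesis .
  next
    case False
    have "(16::nat) ^ Suc d = 16 * 16 ^ d" by simp
    also have "\<dots> \<le> 16 * (16 ^ 15 * fact d)" using Suc by simp
    also have "\<dots> \<le> Suc d * (16 ^ 15 * fact d)" using False by (intro mult_right_mono) auto
    also have "\<dots> = 16 ^ 15 * fact (Suc d)" by (simp add: algebra_simps)
    finally show ?thesis .
  qed
qed

lemma W_sq_fact: "m \<ge> 1 \<Longrightarrow> (W p m d k)\<^sup>2 \<ge> fact d"
proof (induction d)
  case 0 then show ?case by simp
next
  case (Suc d)
  have "W p m (Suc d) k = W p m d k * omega p m (k + d)"
    using W_add[of p m d 1 k] by (simp add: W_def)
  hence "(W p m (Suc d) k)\<^sup>2 = (W p m d k)\<^sup>2 * (omega p m (k + d))\<^sup>2"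
    by (simp add: power_mult_distrib)
  also have "\<dots> \<ge> fact d * (real d + 1)"
  proof (rule mult_mono)
    show "fact d \<le> (W p m d k)\<^sup>2" using Suc by simp
    have "real (k + d) + 1 \<le> (omega p m (k + d))\<^sup>2" using omega_sq_ge[OF Suc(2), where p=p and t="k+d"] .
    thus "real d + 1 \<le> (omega p m (k + d))\<^sup>2" by simp
  qed auto
  finally show ?case by (simp add: algebra_simps)
qed

lemma W_sq_ge: "m \<ge> 1 \<Longrightarrow> (16::real) ^ d \<le> 16 ^ 15 * (W p m d k)\<^sup>2"
proof -
  assume m: "m \<ge> 1"
  have "(16::real) ^ d \<le> 16 ^ 15 * fact d"
    using fact_16[of d] by (metis (mono_tags, lifting) of_nat_fact of_nat_le_iff of_nat_mult of_nat_numeral of_nat_power)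
  also have "\<dots> \<le> 16 ^ 15 * (W p m d k)\<^sup>2" using W_sq_fact[OF m] by simp
  finally show ?thesis .
qed



definition cplx :: "rat \<times> rat \<Rightarrow> complex" where
  "cplx q = Complex (of_rat (fst q)) (of_rat (snd q))"

definition vec :: "nat \<Rightarrow> (rat \<times> rat) list \<Rightarrow> nat \<Rightarrow> complex" where
  "vec p xs k = (if p \<le> k \<and> k - p < length xs then cplx (xs ! (k - p)) else 0)"

lemma rat_near: "0 < (d::real) \<Longrightarrow> \<exists>q. \<bar>x - of_rat q\<bar> < d"
proof -
  assume "0 < d"
  then obtain r where r: "r \<in> \<rat>" "x - d < r" "r < x + d"
    using Rats_dense_in_real[of "x - d" "x + d"] by auto
  from r(1) obtain q where "r = of_rat q" by (auto elim: Rats_cases)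
  thus ?thesis using r by (intro exI[of _ q]) auto
qed

lemma cplx_near:
  assumes "0 < d" shows "\<exists>q. cmod (z - cplx q) < d"
proof -
  obtain q1 where q1: "\<bar>Re z - of_rat q1\<bar> < d/2" using rat_near[of "d/2"] assms by auto
  obtain q2 where q2: "\<bar>Im z - of_rat q2\<bar> < d/2" using rat_near[of "d/2"] assms by auto
  have "cmod (z - cplx (q1, q2)) \<le> \<bar>Re (z - cplx (q1, q2))\<bar> + \<bar>Im (z - cplx (q1, q2))\<bar>"
    by (rule cmod_le)
  also have "\<dots> < d" using q1 q2 by (simp add: cplx_def)
  finally show ?thesis by blast
qed

lemma dense_crit:
  assumes SX: "S \<subseteq> Bp p"
    and H: "\<And>xs. \<exists>C. \<forall>M0. \<exists>M\<ge>M0. \<exists>a\<in>S. (\<forall>k<p+M. a k = vec p xs k) \<and>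
               (\<forall>k\<ge>p+M. (cmod (a k))\<^sup>2 \<le> C * (1/2)^(k-p))"
  shows "dense_in S (Bp p)"
  unfolding dense_in_def
proof (intro conjI SX ballI allI impI)
  fix x and e :: real
  assume x: "x \<in> Bp p" and e: "0 < e"
  define \<epsilon> where "\<epsilon> = e\<^sup>2"
  have \<epsilon>: "0 < \<epsilon>" using e by (simp add: \<epsilon>_def)
  have sx: "summable (\<lambda>k. (cmod (x k))\<^sup>2)" and x0: "\<And>k. k < p \<Longrightarrow> x k = 0"
    using x by (auto simp: Bp_def l2_def)
  obtain L where "\<forall>n\<ge>L. norm (\<Sum>i. (cmod (x (i + n)))\<^sup>2) < \<epsilon>/8"
    using suminf_exist_split[OF _ sx, of "\<epsilon>/8"] \<epsilon> by auto
  hence "norm (\<Sum>i. (cmod (x (i + (p + L))))\<^sup>2) < \<epsilon>/8" by auto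
  hence T: "(\<Sum>i. (cmod (x (i + (p + L))))\<^sup>2) < \<epsilon>/8" by simp
  define \<delta> where "\<delta> = sqrt (\<epsilon> / (8 * (real (p + L) + 1)))"
  have \<delta>: "0 < \<delta>" using \<epsilon> by (simp add: \<delta>_def)
  define Q where "Q i = (SOME q. cmod (x (p + i) - cplx q) < \<delta>)" for i
  have Q: "cmod (x (p + i) - cplx (Q i)) < \<delta>" for i
    unfolding Q_def by (rule someI_ex) (rule cplx_near[OF \<delta>])
  define xs where "xs = map Q [0..<L]"
  have vxs: "vec p xs k = (if p \<le> k \<and> k < p + L then cplx (Q (k - p)) else 0)" for k
    by (auto simp: vec_def xs_def)
  obtain C where HC: "\<forall>M0. \<exists>M\<ge>M0. \<exists>a\<in>S. (\<forall>k<p+M. a k = vec p xs k) \<and>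
               (\<forall>k\<ge>p+M. (cmod (a k))\<^sup>2 \<le> C * (1/2)^(k-p))"
    using H by blast
  obtain M0 where M0: "((1::real)/2)^M0 < \<epsilon> / (32 * (\<bar>C\<bar> + 1))"
    using real_arch_pow_inv[of "\<epsilon> / (32 * (\<bar>C\<bar> + 1))" "1/2"] \<epsilon> by auto
  obtain M a where M: "M \<ge> M0 + L" and aS: "a \<in> S" and aeq: "\<forall>k<p+M. a k = vec p xs k"
    and abd: "\<forall>k\<ge>p+M. (cmod (a k))\<^sup>2 \<le> C * (1/2)^(k-p)"
    using HC by blast
  define f1 where "f1 k = (if k < p + L then \<delta>\<^sup>2 else 0)" for k
  define f2 where "f2 k = (if p + L \<le> k then 2 * (cmod (x k))\<^sup>2 else 0)" for k
  define f3 where "f3 k = (if p + M \<le> k then 2 * C * (1/2)^(k-p) else (0::real))" for k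
  define T where "T = (\<Sum>i. (cmod (x (i + (p + L))))\<^sup>2)"
  have s1: "f1 sums (real (p + L) * \<delta>\<^sup>2)"
  proof -
    have "f1 sums (\<Sum>n\<in>{..<p+L}. f1 n)" by (rule sums_finite) (auto simp: f1_def)
    moreover have "(\<Sum>n\<in>{..<p+L}. f1 n) = real (p + L) * \<delta>\<^sup>2" by (simp add: f1_def)
    ultimately show ?thesis by simp
  qed
  have s2: "f2 sums (2 * T)"
  proof -
    have ss: "summable (\<lambda>i. (cmod (x (i + (p + L))))\<^sup>2)"
      using summable_iff_shift[of "\<lambda>k. (cmod (x k))\<^sup>2" "p+L"] sx by simp
    have "(\<lambda>i. f2 (i + (p + L))) sums (2 * T)"
      unfolding f2_def T_def using sums_mult[OF summable_sums[OF ss], of 2]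
      by simp
    hence "f2 sums (2 * T + (\<Sum>i<p+L. f2 i))" by (simp add: sums_iff_shift)
    moreover have "(\<Sum>i<p+L. f2 i) = 0" by (simp add: f2_def)
    ultimately show ?thesis by simp
  qed
  have s3: "f3 sums (4 * C * (1/2)^M)"
  proof -
    have g: "(\<lambda>i. ((1::real)/2)^i) sums 2" using geometric_sums[of "1/2::real"] by simp
    have "(\<lambda>i. f3 (i + (p + M))) = (\<lambda>i. (2 * C * (1/2)^M) * (1/2)^i)"
      by (auto simp: f3_def power_add)
    moreover have "(\<lambda>i. (2 * C * (1/2)^M) * ((1::real)/2)^i) sums ((2 * C * (1/2)^M) * 2)"
      by (rule sums_mult[OF g])
    ultimately have "(\<lambda>i. f3 (i + (p + M))) sums (4 * C * (1/2)^M)" by (simp add: mult.assoc)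
    hence "f3 sums (4 * C * (1/2)^M + (\<Sum>i<p+M. f3 i))" by (simp add: sums_iff_shift)
    moreover have "(\<Sum>i<p+M. f3 i) = 0" by (simp add: f3_def)
    ultimately show ?thesis by simp
  qed
  have bound: "(cmod ((x - a) k))\<^sup>2 \<le> f1 k + f2 k + f3 k" for k
  proof -
    consider "k < p" | "p \<le> k" "k < p + L" | "p + L \<le> k" "k < p + M" | "p + M \<le> k" by linarith
    thus ?thesis
    proof cases
      case 1
      thus ?thesis using x0[OF 1] aeq M by (auto simp: vxs f1_def f2_def f3_def)
    next
      case 2
      hence "a k = cplx (Q (k - p))" using aeq M by (auto simp: vxs)
      moreover have "cmod (x k - cplx (Q (k - p))) < \<delta>" using Q[of "k - p"] 2 by simp
      ultimately have "(cmod ((x - a) k))\<^sup>2 \<le> \<delta>\<^sup>2"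
        by (simp add: power_mono)
      thus ?thesis using 2 M by (simp add: f1_def f2_def f3_def)
    next
      case 3
      hence "a k = 0" using aeq by (auto simp: vxs)
      thus ?thesis using 3 by (simp add: f1_def f2_def f3_def)
    next
      case 4
      have "(cmod ((x - a) k))\<^sup>2 \<le> (cmod (x k) + cmod (a k))\<^sup>2"
        by (simp add: norm_triangle_ineq4 power_mono)
      also have "\<dots> \<le> 2 * (cmod (x k))\<^sup>2 + 2 * (cmod (a k))\<^sup>2" by (rule sq2)
      also have "\<dots> \<le> 2 * (cmod (x k))\<^sup>2 + 2 * (C * (1/2)^(k-p))"
        using abd 4 by simp
      finally show ?thesis using 4 M by (simp add: f1_def f2_def f3_def)
    qed
  qed
  have sall: "(\<lambda>k. f1 k + f2 k + f3 k) sums (real (p + L) * \<delta>\<^sup>2 + 2 * T + 4 * C * (1/2)^M)"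
    by (intro sums_add s1 s2 s3)
  have le: "l2norm (x - a) \<le> sqrt (real (p + L) * \<delta>\<^sup>2 + 2 * T + 4 * C * (1/2)^M)"
    by (rule l2norm_le(2)[OF bound sall])
  have t1: "real (p + L) * \<delta>\<^sup>2 < \<epsilon> / 8"
  proof -
    have "real (p + L) * \<delta>\<^sup>2 = real (p + L) * (\<epsilon> / (8 * (real (p + L) + 1)))"
      using \<epsilon> by (simp add: \<delta>_def)
    also have "\<dots> < \<epsilon> / 8" using \<epsilon> by (simp add: field_simps)
    finally show ?thesis .
  qed
  have t3: "4 * C * (1/2)^M < \<epsilon> / 8"
  proof -
    have "((1::real)/2)^M \<le> (1/2)^M0" using M by (intro power_decreasing) auto
    have "4 * C * (1/2)^M \<le> 4 * (\<bar>C\<bar> + 1) * (1/2)^M" by (simp add: mult_right_mono)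
    also have "\<dots> \<le> 4 * (\<bar>C\<bar> + 1) * (1/2)^M0"
      using \<open>((1::real)/2)^M \<le> (1/2)^M0\<close> by (intro mult_left_mono) auto
    also have "\<dots> < 4 * (\<bar>C\<bar> + 1) * (\<epsilon> / (32 * (\<bar>C\<bar> + 1)))"
      using M0 by (intro mult_strict_left_mono) auto
    also have "\<dots> = \<epsilon> / 8" by (simp add: field_simps)
    finally show ?thesis .
  qed
  have "real (p + L) * \<delta>\<^sup>2 + 2 * T + 4 * C * (1/2)^M < \<epsilon>"
  proof -
    have t2: "2 * T < \<epsilon> / 4" using T unfolding T_def by simp
    show ?thesis using t1 t2 t3 \<epsilon> by simp
  qed
  hence "sqrt (real (p + L) * \<delta>\<^sup>2 + 2 * T + 4 * C * (1/2)^M) < sqrt \<epsilon>"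
    by (simp add: real_sqrt_less_iff)
  hence "l2norm (x - a) < e" using le e by (simp add: \<epsilon>_def)
  thus "\<exists>s\<in>S. l2norm (x - s) < e" using aS by blast
qed



lemma summable_geo_shift: "summable (\<lambda>k. C * ((1::real)/2)^(k-p))"
proof -
  have "summable (\<lambda>k. C * ((1::real)/2)^k)"
    by (intro summable_mult summable_geometric) simp
  hence "summable (\<lambda>k. C * ((1::real)/2)^((k + p) - p))" by simp
  thus ?thesis using summable_iff_shift[of "\<lambda>k. C * ((1::real)/2)^(k-p)" p] by simp
qed

lemma inBp_of_bound:
  assumes "\<And>k. k < p \<Longrightarrow> a k = 0" "\<And>k. k \<ge> Kb \<Longrightarrow> (cmod (a k))\<^sup>2 \<le> C * (1/2)^(k-p)"
  shows "a \<in> Bp p"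
proof -
  have "summable (\<lambda>k. (cmod (a k))\<^sup>2)"
  proof (rule summable_comparison_test[OF _ summable_geo_shift[of C p]])
    show "\<exists>N. \<forall>n\<ge>N. norm ((cmod (a n))\<^sup>2) \<le> C * (1 / 2) ^ (n - p)"
      using assms(2) by (intro exI[of _ Kb]) simp
  qed
  thus ?thesis using assms(1) by (simp add: Bp_def l2_def)
qed

lemma Hbrev_Suc: "Hbrev p m ((Hbrev p m ^^ j) a) = (Hbrev p m ^^ Suc j) a" by simp

lemma pow_dom_of:
  assumes "n \<ge> 1" "\<And>j. j \<le> n \<Longrightarrow> (Hbrev p m ^^ j) a \<in> Bp p"
  shows "a \<in> pow_dom (Hdom p m) (Hbrev p m) n"
proof -
  have "(Hbrev p m ^^ j) a \<in> Hdom p m" if "j < n" for j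
    using assms(2)[of j] assms(2)[of "Suc j"] that unfolding Hdom_def by simp
  moreover have "a \<in> Hdom p m" using calculation[of 0] assms(1) by simp
  ultimately show ?thesis unfolding pow_dom_def by blast
qed

lemma Hbrev_lin: "Hbrev p m (\<lambda>k. x k + c * y k) = (\<lambda>k. Hbrev p m x k + c * Hbrev p m y k)"
  by (auto simp: Hbrev_def algebra_simps fun_eq_iff)

lemma linear_H: "linear_op (Bp p) (Hdom p m) (Hbrev p m)"
  unfolding linear_op_def
proof (intro conjI ballI allI)
  show "Hdom p m \<subseteq> Bp p" by (auto simp: Hdom_def)
  show "Hbrev p m ` Hdom p m \<subseteq> Bp p" by (auto simp: Hdom_def)
  fix x y c assume "x \<in> Hdom p m" "y \<in> Hdom p m"
  thus "(\<lambda>k. x k + c * y k) \<in> Hdom p m"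
    unfolding Hdom_def using Bp_lincomb by (auto simp: Hbrev_lin)
  show "Hbrev p m (\<lambda>k. x k + c * y k) = (\<lambda>k. Hbrev p m x k + c * Hbrev p m y k)"
    by (rule Hbrev_lin)
qed

lemma vec_Bp: "vec p xs \<in> Bp p"
  by (rule inBp_of_bound[where Kb="p + length xs" and C=0]) (auto simp: vec_def)

lemma vec_Hdom: "vec p xs \<in> Hdom p m"
proof -
  have "Hbrev p m (vec p xs) \<in> Bp p"
    by (rule inBp_of_bound[where Kb="p + length xs" and C=0]) (auto simp: vec_def Hbrev_def)
  thus ?thesis using vec_Bp by (simp add: Hdom_def)
qed

lemma dense_Hdom: "dense_in (Hdom p m) (Bp p)"
proof (rule dense_crit)
  show "Hdom p m \<subseteq> Bp p" by (auto simp: Hdom_def)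
  fix xs
  show "\<exists>C. \<forall>M0. \<exists>M\<ge>M0. \<exists>a\<in>Hdom p m. (\<forall>k<p+M. a k = vec p xs k) \<and>
               (\<forall>k\<ge>p+M. (cmod (a k))\<^sup>2 \<le> C * (1/2)^(k-p))"
  proof (rule exI[of _ 0], intro allI)
    fix M0
    show "\<exists>M\<ge>M0. \<exists>a\<in>Hdom p m. (\<forall>k<p+M. a k = vec p xs k) \<and>
               (\<forall>k\<ge>p+M. (cmod (a k))\<^sup>2 \<le> 0 * (1/2)^(k-p))"
      using vec_Hdom[of p xs m]
      by (intro exI[of _ "M0 + length xs"] conjI bexI[of _ "vec p xs"]) (auto simp: vec_def)
  qed
qed

lemma l2_conv_coord:
  assumes "\<And>i. xs i \<in> l2" "x \<in> l2" "(\<lambda>i. l2norm (xs i - x)) \<longlonglongrightarrow> 0"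
  shows "(\<lambda>i. xs i k) \<longlonglongrightarrow> x k"
proof -
  have "(\<lambda>i. xs i - x) i \<in> l2" for i
    using l2_lincomb[OF assms(1)[of i] assms(2), of "-1"] by (simp add: fun_diff_def)
  hence b: "norm (xs i k - x k) \<le> l2norm (xs i - x)" for i
    using coord_le_l2norm[of "xs i - x" k] by simp
  have "(\<lambda>i. xs i k - x k) \<longlonglongrightarrow> 0"
    by (rule tendsto_norm_zero_cancel, rule tendsto_sandwich[OF _ _ tendsto_const assms(3)])
       (auto simp: b)
  thus ?thesis by (simp add: LIM_zero_iff)
qed

lemma closed_H:
  assumes m: "m \<ge> 1" and n: "n \<ge> 1"
  shows "closed_op (Bp p) (pow_dom (Hdom p m) (Hbrev p m) n) (Hbrev p m ^^ n)"
  unfolding closed_op_def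
proof (intro allI impI)
  fix xs x y
  assume xsD: "\<forall>i. xs i \<in> pow_dom (Hdom p m) (Hbrev p m) n" and x: "x \<in> Bp p" and y: "y \<in> Bp p"
    and c1: "(\<lambda>i. l2norm (xs i - x)) \<longlonglongrightarrow> 0"
    and c2: "(\<lambda>i. l2norm ((Hbrev p m ^^ n) (xs i) - y)) \<longlonglongrightarrow> 0"
  have xsB: "xs i \<in> Bp p" for i using xsD by (auto simp: pow_dom_def Hdom_def)
  have TxsB: "(Hbrev p m ^^ n) (xs i) \<in> Bp p" for i
  proof -
    obtain n' where "n = Suc n'" using n by (cases n) auto
    hence "(Hbrev p m ^^ n') (xs i) \<in> Hdom p m" "n' < n" using xsD by (auto simp: pow_dom_def)
    thus ?thesis using \<open>n = Suc n'\<close> by (simp add: Hdom_def)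
  qed
  have l1: "(\<lambda>i. xs i k) \<longlonglongrightarrow> x k" for k
    using l2_conv_coord[OF _ _ c1] xsB x by (auto simp: Bp_def)
  have l2: "(\<lambda>i. (Hbrev p m ^^ n) (xs i) k) \<longlonglongrightarrow> y k" for k
    using l2_conv_coord[OF _ _ c2] TxsB y by (auto simp: Bp_def)
  have Ty: "(Hbrev p m ^^ n) x = y"
  proof
    fix k
    show "(Hbrev p m ^^ n) x k = y k"
    proof (cases "p \<le> k")
      case True
      have "(\<lambda>i. (Hbrev p m ^^ n) (xs i) k) = (\<lambda>i. complex_of_real (W p m n k) * xs i (k + n))"
        using True by (simp add: Tpow)
      moreover have "(\<lambda>i. complex_of_real (W p m n k) * xs i (k + n)) \<longlonglongrightarrow> complex_of_real (W p m n k) * x (k + n)"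
        by (intro tendsto_mult tendsto_const l1)
      ultimately have "y k = complex_of_real (W p m n k) * x (k + n)"
        using l2[of k] LIMSEQ_unique by metis
      thus ?thesis using True by (simp add: Tpow)
    next
      case False
      thus ?thesis using y Tpow_low[of k p n m x] n by (simp add: Bp_def)
    qed
  qed
  have Tj: "(Hbrev p m ^^ j) x \<in> Bp p" if j: "j \<le> n" for j
  proof (cases "j = 0")
    case True thus ?thesis using x by simp
  next
    case False
    define d where "d = n - j"
    have ysum: "summable (\<lambda>k. (cmod (y k))\<^sup>2)" using y by (simp add: Bp_def l2_def)
    have gs: "summable (\<lambda>k. (cmod (y (k - d)))\<^sup>2)"
      using summable_iff_shift[of "\<lambda>k. (cmod (y (k - d)))\<^sup>2" d] ysum by simp
    have "(Hbrev p m ^^ j) x \<in> l2"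
      unfolding l2_def
    proof (simp, rule summable_comparison_test[OF _ gs], intro exI[of _ "p + n"] allI impI)
      fix k assume k: "p + n \<le> k"
      have kd: "p \<le> k - d" "k - d + d = k" "k - d + n = k + j" using k j by (auto simp: d_def)
      have "y (k - d) = (Hbrev p m ^^ n) x (k - d)" using Ty by simp
      also have "\<dots> = complex_of_real (W p m n (k - d)) * x (k + j)"
        using kd by (simp add: Tpow)
      finally have yk: "y (k - d) = complex_of_real (W p m n (k - d)) * x (k + j)" .
      have "W p m n (k - d) = W p m (d + j) (k - d)" using j by (simp add: d_def)
      also have "\<dots> = W p m d (k - d) * W p m j k" using kd by (simp add: W_add)
      finally have Wn: "W p m n (k - d) = W p m d (k - d) * W p m j k" .
      have "W p m j k \<le> W p m n (k - d)"
      proof -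
        have "1 * W p m j k \<le> W p m d (k - d) * W p m j k"
          using W_ge1[OF m] W_pos[OF m] by (intro mult_right_mono) (auto simp: less_imp_le)
        thus ?thesis unfolding Wn by simp
      qed
      hence "cmod ((Hbrev p m ^^ j) x k) \<le> cmod (y (k - d))"
        using k yk W_pos[OF m, of p j k] W_pos[OF m, of p n "k-d"] by (simp add: Tpow norm_mult mult_right_mono)
      thus "norm ((cmod ((Hbrev p m ^^ j) x k))\<^sup>2) \<le> (cmod (y (k - d)))\<^sup>2"
        by (simp add: power_mono)
    qed
    moreover have "\<forall>k<p. (Hbrev p m ^^ j) x k = 0" using Tpow_low False by auto
    ultimately show ?thesis by (simp add: Bp_def)
  qed
  show "x \<in> pow_dom (Hdom p m) (Hbrev p m) n \<and> (Hbrev p m ^^ n) x = y"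
    using pow_dom_of[OF n Tj] Ty by blast
qed



definition vbd :: "(rat \<times> rat) list \<Rightarrow> real" where
  "vbd xs = (\<Sum>i<length xs. cmod (cplx (xs ! i)))"

lemma vbd_elem: "i < length xs \<Longrightarrow> cmod (cplx (xs ! i)) \<le> vbd xs"
  unfolding vbd_def by (rule member_le_sum[where f="\<lambda>i. cmod (cplx (xs ! i))"]) auto

lemma vec_bound: "cmod (vec p xs k) \<le> vbd xs"
  using vbd_elem[of "k - p" xs] by (auto simp: vec_def vbd_def sum_nonneg)

lemma vbd_nonneg: "vbd xs \<ge> 0" by (simp add: vbd_def sum_nonneg)

lemma div_W_bound:
  assumes m: "m \<ge> 1" and V: "cmod v \<le> V" and C: "C \<ge> 0"
    and key: "V\<^sup>2 * 2^e \<le> C * 16^d"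
  shows "(cmod (v / complex_of_real (W p m d k)))\<^sup>2 \<le> C * 16^15 * (1/2)^e"
proof -
  define w where "w = W p m d k"
  have w: "w > 0" using W_pos[OF m] by (simp add: w_def)
  have w16: "(16::real)^d \<le> 16^15 * w\<^sup>2" using W_sq_ge[OF m] by (simp add: w_def)
  have "(cmod (v / complex_of_real w))\<^sup>2 = (cmod v)\<^sup>2 / w\<^sup>2"
    using w by (simp add: norm_divide power_divide)
  also have "\<dots> \<le> V\<^sup>2 / w\<^sup>2"
    using V by (intro divide_right_mono power_mono) auto
  also have "\<dots> \<le> C * 16^15 * (1/2)^e"
  proof -
    have "V\<^sup>2 * 2^e \<le> C * 16^d" by (rule key)
    also have "\<dots> \<le> C * (16^15 * w\<^sup>2)" using w16 C by (rule mult_left_mono)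
    finally have "V\<^sup>2 * 2^e \<le> C * 16^15 * w\<^sup>2" by (simp add: mult.assoc)
    thus ?thesis using w by (simp add: field_simps power_one_over)
  qed
  finally show ?thesis by (simp add: w_def)
qed

definition psi :: "nat \<Rightarrow> nat \<Rightarrow> (rat \<times> rat) list \<Rightarrow> nat \<Rightarrow> nat \<Rightarrow> complex" where
  "psi p m xs N k = (if p \<le> k then vec p xs (p + (k - p) mod N) /
      complex_of_real (W p m (((k - p) div N) * N) (p + (k - p) mod N)) else 0)"

lemma psi_low: "N \<ge> 1 \<Longrightarrow> k < p + N \<Longrightarrow> psi p m xs N k = vec p xs k"
  by (auto simp: psi_def vec_def)

lemma pow16: "(2::real)^e \<le> 16^d" if "e \<le> 4 * d"
proof -
  have "(2::real)^e \<le> 2^(4*d)" using that by (intro power_increasing) auto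
  also have "\<dots> = 16^d" by (simp add: power_mult)
  finally show ?thesis .
qed

lemma psi_high:
  assumes m: "m \<ge> 1" and N: "N \<ge> 1" and k: "k \<ge> p + N"
  shows "(cmod (psi p m xs N k))\<^sup>2 \<le> (vbd xs)\<^sup>2 * 16^15 * (1/2)^(k-p)"
proof -
  define q where "q = (k - p) div N"
  define r where "r = (k - p) mod N"
  have qr: "k - p = q * N + r" "r < N" using N by (auto simp: q_def r_def)
  have q: "q \<ge> 1" using k N div_le_mono[of N "k - p" N] unfolding q_def by simp
  have "N \<le> q * N" using q by simp
  hence "k - p \<le> 4 * (q * N)" using qr by linarith
  hence e: "(2::real)^(k-p) \<le> 16^(q*N)" by (rule pow16)
  have "psi p m xs N k = vec p xs (p + r) / complex_of_real (W p m (q * N) (p + r))"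
    using k by (simp add: psi_def q_def r_def)
  also have "(cmod \<dots>)\<^sup>2 \<le> (vbd xs)\<^sup>2 * 16^15 * (1/2)^(k-p)"
  proof (rule div_W_bound[OF m vec_bound])
    show "(vbd xs)\<^sup>2 * 2 ^ (k - p) \<le> (vbd xs)\<^sup>2 * 16 ^ (q * N)"
      using e by (simp add: mult_left_mono)
  qed simp
  finally show ?thesis .
qed

lemma psi_periodic:
  assumes m: "m \<ge> 1" and N: "N \<ge> 1"
  shows "(Hbrev p m ^^ N) (psi p m xs N) = psi p m xs N"
proof
  fix k
  show "(Hbrev p m ^^ N) (psi p m xs N) k = psi p m xs N k"
  proof (cases "p \<le> k")
    case False
    thus ?thesis using Tpow_low[of k p N m] N by (simp add: psi_def)
  next
    case True
    define q where "q = (k - p) div N"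
    define r where "r = (k - p) mod N"
    have qr: "k - p = q * N + r" using N by (simp add: q_def r_def)
    have d1: "(k + N - p) div N = q + 1" and d2: "(k + N - p) mod N = r"
    proof -
      have e: "k + N - p = (k - p) + N" using True by simp
      show "(k + N - p) div N = q + 1" using N unfolding e q_def by simp
      show "(k + N - p) mod N = r" using N unfolding e r_def by simp
    qed
    have Wf: "W p m ((q + 1) * N) (p + r) = W p m (q * N) (p + r) * W p m N k"
    proof -
      have K: "k = p + (k - p)" using True by simp
      have "p + r + q * N = k" using qr K by linarith
      thus ?thesis using W_add[of p m "q * N" N "p + r"] by (simp add: algebra_simps)
    qed
    have "(Hbrev p m ^^ N) (psi p m xs N) k = complex_of_real (W p m N k) * psi p m xs N (k + N)"
      using True by (simp add: Tpow)
    also have "psi p m xs N (k + N) = vec p xs (p + r) / complex_of_real (W p m ((q + 1) * N) (p + r))"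
      using True d1 d2 by (simp add: psi_def)
    also have "complex_of_real (W p m N k) * (vec p xs (p + r) / complex_of_real (W p m ((q + 1) * N) (p + r)))
       = vec p xs (p + r) / complex_of_real (W p m (q * N) (p + r))"
      unfolding Wf using W_pos[OF m, of p N k] W_pos[OF m, of p "q * N" "p + r"]
      by (simp add: field_simps)
    also have "\<dots> = psi p m xs N k" using True by (simp add: psi_def q_def r_def)
    finally show ?thesis .
  qed
qed

lemma psi_iter_Bp:
  assumes m: "m \<ge> 1" and N: "N \<ge> 1" and j: "j \<le> N"
  shows "(Hbrev p m ^^ j) (psi p m xs N) \<in> Bp p"
proof (rule inBp_of_bound[where Kb="p + N" and C="(vbd xs)\<^sup>2 * 16^N * 16^15"])
  fix k assume "k < p"
  thus "(Hbrev p m ^^ j) (psi p m xs N) k = 0"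
    using Tpow_low[of k p j m] by (cases "j = 0") (auto simp: psi_def)
next
  fix k assume k: "k \<ge> p + N"
  define q where "q = (k - p + j) div N"
  define r where "r = (k - p + j) mod N"
  have qr: "k - p + j = q * N + r" "r < N" using N by (auto simp: q_def r_def)
  have q: "q \<ge> 1" using k N div_le_mono[of N "k - p + j" N] unfolding q_def by simp
  have K: "k = p + (k - p)" using k by simp
  have qN: "q * N \<ge> j" using q j by (metis mult_le_mono1 nat_mult_1 order_trans)
  have s1: "q * N - j + j = q * N" using qN by simp
  have kk: "p + r + (q * N - j) = k" using qr s1 K by linarith
  have Wf: "W p m (q * N) (p + r) = W p m (q * N - j) (p + r) * W p m j k"
    using W_add[of p m "q * N - j" j "p + r"] qN kk by simp
  have "(Hbrev p m ^^ j) (psi p m xs N) k = complex_of_real (W p m j k) * psi p m xs N (k + j)"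
    using k by (simp add: Tpow)
  also have "psi p m xs N (k + j) = vec p xs (p + r) / complex_of_real (W p m (q * N) (p + r))"
  proof -
    have "k + j - p = k - p + j" using k by simp
    thus ?thesis using k by (simp add: psi_def q_def r_def)
  qed
  also have "complex_of_real (W p m j k) * (vec p xs (p + r) / complex_of_real (W p m (q * N) (p + r)))
      = vec p xs (p + r) / complex_of_real (W p m (q * N - j) (p + r))"
    unfolding Wf using W_pos[OF m, of p j k] W_pos[OF m, of p "q * N - j" "p + r"]
    by (simp add: field_simps)
  also have "(cmod \<dots>)\<^sup>2 \<le> ((vbd xs)\<^sup>2 * 16^N) * 16^15 * (1/2)^(k-p)"
  proof (rule div_W_bound[OF m vec_bound])
    have aux: "a \<le> 4 * (N + c)" if "a + j = b + r" "r < N" "c + j = b" for a b c :: nat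
      using that by simp
    have "k - p \<le> 4 * (N + (q * N - j))" using aux[OF qr(1) qr(2) s1] .
    hence "(2::real)^(k-p) \<le> 16^(N + (q * N - j))" by (rule pow16)
    thus "(vbd xs)\<^sup>2 * 2 ^ (k - p) \<le> (vbd xs)\<^sup>2 * 16 ^ N * 16 ^ (q * N - j)"
      by (simp add: mult_left_mono power_add mult.assoc)
  qed simp
  finally show "(cmod ((Hbrev p m ^^ j) (psi p m xs N) k))\<^sup>2 \<le> (vbd xs)\<^sup>2 * 16^N * 16^15 * (1/2)^(k-p)" .
qed

lemma dense_periodic:
  assumes m: "m \<ge> 1"
  shows "dense_in {\<phi>\<in>Bp p. \<exists>j\<ge>1. \<phi> \<in> pow_dom (Hdom p m) (Hbrev p m) j \<and> (Hbrev p m ^^ j) \<phi> = \<phi>} (Bp p)"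
proof (rule dense_crit)
  show "{\<phi>\<in>Bp p. \<exists>j\<ge>1. \<phi> \<in> pow_dom (Hdom p m) (Hbrev p m) j \<and> (Hbrev p m ^^ j) \<phi> = \<phi>} \<subseteq> Bp p"
    by auto
  fix xs
  show "\<exists>C. \<forall>M0. \<exists>M\<ge>M0. \<exists>a\<in>{\<phi>\<in>Bp p. \<exists>j\<ge>1. \<phi> \<in> pow_dom (Hdom p m) (Hbrev p m) j \<and> (Hbrev p m ^^ j) \<phi> = \<phi>}.
     (\<forall>k<p+M. a k = vec p xs k) \<and> (\<forall>k\<ge>p+M. (cmod (a k))\<^sup>2 \<le> C * (1/2)^(k-p))"
  proof (rule exI[of _ "(vbd xs)\<^sup>2 * 16^15"], intro allI)
    fix M0 :: nat
    define N where "N = M0 + 1"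
    have N: "N \<ge> 1" by (simp add: N_def)
    have inB: "psi p m xs N \<in> Bp p" using psi_iter_Bp[OF m N, of 0] by simp
    have pd: "psi p m xs N \<in> pow_dom (Hdom p m) (Hbrev p m) N"
      by (rule pow_dom_of[OF N]) (rule psi_iter_Bp[OF m N])
    show "\<exists>M\<ge>M0. \<exists>a\<in>{\<phi>\<in>Bp p. \<exists>j\<ge>1. \<phi> \<in> pow_dom (Hdom p m) (Hbrev p m) j \<and> (Hbrev p m ^^ j) \<phi> = \<phi>}.
     (\<forall>k<p+M. a k = vec p xs k) \<and> (\<forall>k\<ge>p+M. (cmod (a k))\<^sup>2 \<le> (vbd xs)\<^sup>2 * 16^15 * (1/2)^(k-p))"
    proof (intro exI[of _ N] conjI bexI[of _ "psi p m xs N"] allI impI)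
      show "M0 \<le> N" by (simp add: N_def)
      show "psi p m xs N \<in> {\<phi>\<in>Bp p. \<exists>j\<ge>1. \<phi> \<in> pow_dom (Hdom p m) (Hbrev p m) j \<and> (Hbrev p m ^^ j) \<phi> = \<phi>}"
        using inB pd psi_periodic[OF m N] N by blast
      fix k
      show "k < p + N \<Longrightarrow> psi p m xs N k = vec p xs k" by (rule psi_low[OF N])
      show "p + N \<le> k \<Longrightarrow> (cmod (psi p m xs N k))\<^sup>2 \<le> (vbd xs)\<^sup>2 * 16^15 * (1/2)^(k-p)"
        by (rule psi_high[OF m N])
    qed
  qed
qed



definition En :: "nat \<Rightarrow> (rat \<times> rat) list" where
  "En n = fst (from_nat n :: (rat \<times> rat) list \<times> nat)"

lemma En_often: "\<exists>n\<ge>B. En n = xs"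
proof -
  have "inj (\<lambda>b::nat. to_nat (xs, b))" by (auto simp: inj_def)
  hence "infinite (range (\<lambda>b::nat. to_nat (xs, b)))" by (rule range_inj_infinite)
  then obtain n where "n \<ge> B" "n \<in> range (\<lambda>b::nat. to_nat (xs, b))"
    using infinite_nat_iff_unbounded_le by blast
  thus ?thesis by (auto simp: En_def)
qed

definition okc :: "nat \<Rightarrow> bool" where
  "okc n = (length (En n) \<le> n \<and> vbd (En n) \<le> real n)"

definition cc :: "nat \<Rightarrow> nat \<Rightarrow> nat \<Rightarrow> complex" where
  "cc p n i = (if okc n then vec p (En n) (p + i) else 0)"

lemma cc_bound: "cmod (cc p n i) \<le> real n"
  using vec_bound[of p "En n" "p + i"] by (auto simp: cc_def okc_def)

definition phi :: "nat \<Rightarrow> nat \<Rightarrow> nat \<Rightarrow> complex" where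
  "phi p m k = (if p \<le> k \<and> (k - p) - (floor_sqrt (k - p))\<^sup>2 < floor_sqrt (k - p)
     then cc p (floor_sqrt (k - p)) ((k - p) - (floor_sqrt (k - p))\<^sup>2) /
          complex_of_real (W p m ((floor_sqrt (k - p))\<^sup>2) (p + ((k - p) - (floor_sqrt (k - p))\<^sup>2)))
     else 0)"

lemma fsqrt_blk: "i < l \<Longrightarrow> floor_sqrt (l\<^sup>2 + i) = l"
  by (rule floor_sqrt_unique) (auto simp: power2_eq_square)

lemma phi_blk: "i < l \<Longrightarrow> phi p m (p + l\<^sup>2 + i) = cc p l i / complex_of_real (W p m (l\<^sup>2) (p + i))"
  using fsqrt_blk[of i l] by (simp add: phi_def add.assoc)

lemma phi_low: "k < p \<Longrightarrow> phi p m k = 0" by (simp add: phi_def)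

lemma phi_cases:
  assumes "p \<le> k"
  shows "phi p m k = 0 \<or> (\<exists>l i. i < l \<and> k = p + l\<^sup>2 + i \<and> phi p m k = cc p l i / complex_of_real (W p m (l\<^sup>2) (p + i)))"
proof (cases "(k - p) - (floor_sqrt (k - p))\<^sup>2 < floor_sqrt (k - p)")
  case True
  define l where "l = floor_sqrt (k - p)"
  define i where "i = (k - p) - l\<^sup>2"
  have "l\<^sup>2 \<le> k - p" unfolding l_def by simp
  hence "k = p + l\<^sup>2 + i" using assms by (simp add: i_def)
  moreover have "i < l" using True by (simp add: i_def l_def)
  moreover have "phi p m k = cc p l i / complex_of_real (W p m (l\<^sup>2) (p + i))"
    using True assms by (simp add: phi_def l_def i_def)
  ultimately show ?thesis by blast
next
  case False thus ?thesis by (simp add: phi_def)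
qed

lemma Tphi_low: "k < p \<Longrightarrow> (Hbrev p m ^^ N) (phi p m) k = 0"
  using Tpow_low[of k p N m] by (cases "N = 0") (auto simp: phi_low)

lemma blk_lemma:
  fixes l i N :: nat
  assumes "i < l" "N * N + N \<le> l * l + i"
  shows "N * N + l \<le> l * l"
proof (cases "l \<le> N")
  case True
  have "l * l \<le> N * N" using True by (intro mult_le_mono) auto
  hence "l * l + i < N * N + N" using assms(1) True by linarith
  thus ?thesis using assms(2) by linarith
next
  case False
  hence "Suc N \<le> l" by simp
  hence "Suc N * l \<le> l * l" by (rule mult_le_mono1)
  moreover have "N * N \<le> N * l" using False by (intro mult_le_mono2) simp
  moreover have "Suc N * l = l + N * l" by simp
  ultimately show ?thesis by linarith
qed

lemma sq_le_4pow: "(real l)\<^sup>2 \<le> 4 ^ l"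
proof -
  have "l < 2 ^ l" by simp
  hence "l * l \<le> 2 ^ l * 2 ^ l" by (intro mult_le_mono) auto
  hence "real (l * l) \<le> real (2 ^ l * 2 ^ l)" by linarith
  thus ?thesis by (simp add: power2_eq_square power_mult_distrib[symmetric])
qed

lemma phi_T_bound:
  assumes m: "m \<ge> 1" and k: "p \<le> k"
    and cond: "\<And>l i. i < l \<Longrightarrow> k + N = p + l\<^sup>2 + i \<Longrightarrow> N + l \<le> l\<^sup>2"
  shows "(cmod ((Hbrev p m ^^ N) (phi p m) k))\<^sup>2 \<le> 16^15 * (1/2)^(k-p)"
proof -
  have T: "(Hbrev p m ^^ N) (phi p m) k = complex_of_real (W p m N k) * phi p m (k + N)"
    using k by (simp add: Tpow)
  from phi_cases[of p "k + N" m] k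
  consider "phi p m (k + N) = 0" | l i where "i < l" "k + N = p + l\<^sup>2 + i"
      "phi p m (k + N) = cc p l i / complex_of_real (W p m (l\<^sup>2) (p + i))" by auto
  thus ?thesis
  proof cases
    case 1 thus ?thesis using T by simp
  next
    case 2
    have c: "N + l \<le> l\<^sup>2" using cond[OF 2(1,2)] .
    define d where "d = l\<^sup>2 - N"
    have ld: "l\<^sup>2 = d + N" "l \<le> d" using c by (auto simp: d_def)
    have kd: "k = p + i + d" using 2(2) ld(1) by simp
    have Wf: "W p m (l\<^sup>2) (p + i) = W p m d (p + i) * W p m N k"
      unfolding ld(1) W_add kd by simp
    have "(Hbrev p m ^^ N) (phi p m) k = cc p l i / complex_of_real (W p m d (p + i))"
      unfolding T 2(3) Wf using W_pos[OF m, of p N k] W_pos[OF m, of p d "p + i"]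
      by (simp add: field_simps)
    also have "(cmod \<dots>)\<^sup>2 \<le> 1 * 16^15 * (1/2)^(k-p)"
    proof (rule div_W_bound[OF m cc_bound])
      have "(real l)\<^sup>2 \<le> 4 ^ l" by (rule sq_le_4pow)
      also have "\<dots> \<le> 4 ^ d" using ld(2) by (intro power_increasing) auto
      finally have a: "(real l)\<^sup>2 \<le> 4 ^ d" .
      have "k - p \<le> 2 * d" using kd 2(1) ld(2) by simp
      hence "(2::real) ^ (k - p) \<le> 2 ^ (2 * d)" by (intro power_increasing) auto
      also have "\<dots> = 4 ^ d" by (simp add: power_mult)
      finally have b: "(2::real) ^ (k - p) \<le> 4 ^ d" .
      have "(real l)\<^sup>2 * 2 ^ (k - p) \<le> 4 ^ d * 4 ^ d"
        using a b by (intro mult_mono) auto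
      also have "\<dots> = 1 * 16 ^ d" by (simp add: power_mult_distrib[symmetric])
      finally show "(real l)\<^sup>2 * 2 ^ (k - p) \<le> 1 * 16 ^ d" .
    qed simp
    finally show ?thesis by simp
  qed
qed

lemma phi_T_Bp:
  assumes m: "m \<ge> 1"
  shows "(Hbrev p m ^^ N) (phi p m) \<in> Bp p"
proof (rule inBp_of_bound[where Kb="p + N * N + N" and C="16^15"])
  fix k assume "k < p" thus "(Hbrev p m ^^ N) (phi p m) k = 0" by (rule Tphi_low)
next
  fix k assume k: "k \<ge> p + N * N + N"
  show "(cmod ((Hbrev p m ^^ N) (phi p m) k))\<^sup>2 \<le> 16^15 * (1/2)^(k-p)"
  proof (rule phi_T_bound[OF m])
    show "p \<le> k" using k by simp
    fix l i assume li: "i < l" "k + N = p + l\<^sup>2 + i"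
    have "N * N + N \<le> l * l + i" using k li(2) by (simp add: power2_eq_square)
    hence "N * N + l \<le> l * l" by (rule blk_lemma[OF li(1)])
    moreover have "N \<le> N * N" by (cases N) auto
    ultimately have "N + l \<le> l * l" by linarith
    thus "N + l \<le> l\<^sup>2" by (simp add: power2_eq_square)
  qed
qed

lemma dense_orbit:
  assumes m: "m \<ge> 1"
  shows "dense_in (range (\<lambda>n. (Hbrev p m ^^ n) (phi p m))) (Bp p)"
proof (rule dense_crit)
  show "range (\<lambda>n. (Hbrev p m ^^ n) (phi p m)) \<subseteq> Bp p" using phi_T_Bp[OF m] by auto
  fix xs
  show "\<exists>C. \<forall>M0. \<exists>M\<ge>M0. \<exists>a\<in>range (\<lambda>n. (Hbrev p m ^^ n) (phi p m)). (\<forall>k<p+M. a k = vec p xs k) \<and>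
               (\<forall>k\<ge>p+M. (cmod (a k))\<^sup>2 \<le> C * (1/2)^(k-p))"
  proof (rule exI[of _ "16^15"], intro allI)
    fix M0 :: nat
    obtain n where n: "n \<ge> M0 + length xs + nat \<lceil>vbd xs\<rceil>" and En: "En n = xs"
      using En_often by blast
    have ok: "okc n"
    proof -
      have "nat \<lceil>vbd xs\<rceil> \<le> n" using n by linarith
      hence "real (nat \<lceil>vbd xs\<rceil>) \<le> real n" by (simp only: of_nat_le_iff)
      moreover have "vbd xs \<le> real (nat \<lceil>vbd xs\<rceil>)" by (rule real_nat_ceiling_ge)
      ultimately have v: "vbd xs \<le> real n" by linarith
      have "length xs \<le> n" using n by simp
      with v show ?thesis unfolding okc_def En by simp
    qed
    have low: "(Hbrev p m ^^ (n * n)) (phi p m) k = vec p xs k" if "k < p + n" for k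
    proof (cases "p \<le> k")
      case False thus ?thesis using Tphi_low by (simp add: vec_def)
    next
      case True
      define i where "i = k - p"
      have i: "i < n" "k = p + i" using that True by (auto simp: i_def)
      have "(Hbrev p m ^^ (n * n)) (phi p m) k = complex_of_real (W p m (n * n) k) * phi p m (k + n * n)"
        using True by (simp add: Tpow)
      also have "k + n * n = p + n\<^sup>2 + i" using i by (simp add: power2_eq_square)
      also have "phi p m (p + n\<^sup>2 + i) = cc p n i / complex_of_real (W p m (n\<^sup>2) (p + i))"
        by (rule phi_blk[OF i(1)])
      also have "complex_of_real (W p m (n * n) k) * (cc p n i / complex_of_real (W p m (n\<^sup>2) (p + i))) = cc p n i"
        using W_pos[OF m, of p "n * n" k] i(2) by (simp add: power2_eq_square)
      also have "\<dots> = vec p xs k" using ok En i(2) by (simp add: cc_def)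
      finally show ?thesis .
    qed
    have high: "(cmod ((Hbrev p m ^^ (n * n)) (phi p m) k))\<^sup>2 \<le> 16^15 * (1/2)^(k-p)" if k: "k \<ge> p + n" for k
    proof (rule phi_T_bound[OF m])
      show "p \<le> k" using k by simp
      fix l i assume li: "i < l" "k + n * n = p + l\<^sup>2 + i"
      have "n * n + n \<le> l * l + i" using k li(2) by (simp add: power2_eq_square)
      hence "n * n + l \<le> l * l" by (rule blk_lemma[OF li(1)])
      thus "n * n + l \<le> l\<^sup>2" by (simp add: power2_eq_square)
    qed
    show "\<exists>M\<ge>M0. \<exists>a\<in>range (\<lambda>n. (Hbrev p m ^^ n) (phi p m)). (\<forall>k<p+M. a k = vec p xs k) \<and>
               (\<forall>k\<ge>p+M. (cmod (a k))\<^sup>2 \<le> 16^15 * (1/2)^(k-p))"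
      using n low high
      by (intro exI[of _ n] conjI bexI[of _ "(Hbrev p m ^^ (n * n)) (phi p m)"]) auto
  qed
qed

theorem theorem3p5:
  fixes p m :: nat
  assumes "m \<ge> 1"
  shows "chaotic (Bp p) (Hdom p m) (Hbrev p m)"
  unfolding chaotic_def
proof (intro conjI allI impI)
  show "linear_op (Bp p) (Hdom p m) (Hbrev p m)" by (rule linear_H)
  show "dense_in (Hdom p m) (Bp p)" by (rule dense_Hdom)
  fix n :: nat assume "n \<ge> 1"
  thus "closed_op (Bp p) (pow_dom (Hdom p m) (Hbrev p m) n) (Hbrev p m ^^ n)"
    by (rule closed_H[OF assms])
next
  show "\<exists>\<phi>. (\<forall>n\<ge>1. \<phi> \<in> pow_dom (Hdom p m) (Hbrev p m) n) \<and> dense_in (range (\<lambda>n. (Hbrev p m ^^ n) \<phi>)) (Bp p)"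
    using pow_dom_of[OF _ phi_T_Bp[OF assms]] dense_orbit[OF assms] by blast
next
  show "dense_in {\<phi>\<in>Bp p. \<exists>j\<ge>1. \<phi> \<in> pow_dom (Hdom p m) (Hbrev p m) j \<and> (Hbrev p m ^^ j) \<phi> = \<phi>} (Bp p)"
    by (rule dense_periodic[OF assms])
qed


end
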